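(* Let $R$ be a finitely generated integral $\mathbb{K}$-algebra with an effective, pointed grading by a finitely generated abelian group $K$, let $(\pi,\mathrm{id}_K)\colon S=\mathbb{K}[T_1,\dots,T_r]\to R$ be a minimal presentation, $I:=\ker\pi$, $G:=\operatorname{Aut}_K(S)$, $W:=\bigoplus_{u\in\Omega_I}S_u$ and $I_W:=I\cap W$. Then $I_W$ generates the ideal $I$, and $$\operatorname{Stab}_I(G)=\operatorname{Stab}_{I_W}(G)=\{g\in G;\ g\cdot I_W=I_W\}.$$
   Context: $\mathbb{K}$ algebraically closed of characteristic zero. $\operatorname{Aut}_K(S)$ is the group of graded automorphisms $(\varphi,\psi)$ of $S$, acting by $f\mapsto\varphi(f)$; $\operatorname{Stab}_N(G)=\{g\in G;\ g\cdot N=N\}$. Effective/pointed: the weight monoid $\omega(R)=\{w;R_w\ne0\}$ generates $K$, $R_0=\mathbb{K}$ and the cone generated by $\omega(R)$ in $K\otimes\mathbb{Q}$ contains no line. Minimal presentation: graded epimorphism $(\pi,\kappa)$ from a $K$-graded polynomial ring with homogeneous variables, $\kappa$ a group isomorphism, $\ker\pi\subseteq\langle T_1,\dots,T_r\rangle^2$. $w'\le w$ iff $w-w'\in\omega(S)$; $\Omega_I:=\{w\in K;\ I_w\not\subseteq I_{<w}\}$ with $I_{<w}$ the ideal of $S$ generated by all $I_{w'}=I\cap S_{w'}$, $w'<w$. *)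

theory Defs
  imports "HOL-Library.Poly_Mapping" "HOL-Computational_Algebra.Polynomial"
begin

text \<open>Polynomial ring K[T_i : i in 'n] as finitely supported maps from exponent vectors
  to coefficients.\<close>
type_synonym ('n, 'k) mpoly = "('n \<Rightarrow>\<^sub>0 nat) \<Rightarrow>\<^sub>0 'k"

definition alg_closed_field :: "'k::field itself \<Rightarrow> bool" where
  "alg_closed_field _ \<longleftrightarrow> (\<forall>p :: 'k poly. degree p > 0 \<longrightarrow> (\<exists>x. poly p x = 0))"

primrec gmult :: "nat \<Rightarrow> 'g::ab_group_add \<Rightarrow> 'g" where
  "gmult 0 x = 0"
| "gmult (Suc n) x = x + gmult n x"

definition group_gen :: "'g::ab_group_add set \<Rightarrow> 'g set" where
  "group_gen A = \<Inter>{H. 0 \<in> H \<and> A \<subseteq> H \<and> (\<forall>x\<in>H. \<forall>y\<in>H. x - y \<in> H)}"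

definition fin_gen_group :: "'g::ab_group_add itself \<Rightarrow> bool" where
  "fin_gen_group _ \<longleftrightarrow> (\<exists>A :: 'g set. finite A \<and> group_gen A = UNIV)"

definition torsion :: "'g::ab_group_add \<Rightarrow> bool" where
  "torsion x \<longleftrightarrow> (\<exists>n>0. gmult n x = 0)"

text \<open>x \<otimes> 1 lies in the rational cone generated by Om inside K \<otimes> Q.\<close>
definition in_qcone :: "'g::ab_group_add set \<Rightarrow> 'g \<Rightarrow> bool" where
  "in_qcone Om x \<longleftrightarrow> (\<exists>n>0. \<exists>c :: 'g \<Rightarrow> nat. finite {w. c w \<noteq> 0} \<and> {w. c w \<noteq> 0} \<subseteq> Om \<and>
      torsion (gmult n x - (\<Sum>w\<in>{w. c w \<noteq> 0}. gmult (c w) w)))"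

definition qcone_contains_line :: "'g::ab_group_add set \<Rightarrow> bool" where
  "qcone_contains_line Om \<longleftrightarrow> (\<exists>x. \<not> torsion x \<and> in_qcone Om x \<and> in_qcone Om (- x))"

definition mdeg :: "('n::finite \<Rightarrow> 'g::ab_group_add) \<Rightarrow> ('n \<Rightarrow>\<^sub>0 nat) \<Rightarrow> 'g" where
  "mdeg deg m = (\<Sum>i\<in>UNIV. gmult (Poly_Mapping.lookup m i) (deg i))"

definition tdeg :: "('n::finite \<Rightarrow>\<^sub>0 nat) \<Rightarrow> nat" where
  "tdeg m = (\<Sum>i\<in>UNIV. Poly_Mapping.lookup m i)"

definition hom_part :: "('n::finite \<Rightarrow> 'g::ab_group_add) \<Rightarrow> 'g \<Rightarrow> ('n, 'k::zero) mpoly set" where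
  "hom_part deg w = {f. \<forall>m\<in>Poly_Mapping.keys f. mdeg deg m = w}"

definition const :: "'k::zero \<Rightarrow> ('n, 'k) mpoly" where
  "const c = Poly_Mapping.single 0 c"

definition gen_ideal :: "'a::comm_ring_1 set \<Rightarrow> 'a set" where
  "gen_ideal A = {f. \<exists>B c. finite B \<and> B \<subseteq> A \<and> f = (\<Sum>b\<in>B. c b * b)}"

definition weight_monoid_S :: "('n::finite \<Rightarrow> 'g::ab_group_add) \<Rightarrow> ('n, 'k::zero) mpoly itself \<Rightarrow> 'g set" where
  "weight_monoid_S deg _ = {w. hom_part deg w \<noteq> ({0} :: ('n, 'k) mpoly set)}"

definition gle :: "('n::finite \<Rightarrow> 'g::ab_group_add) \<Rightarrow> ('n, 'k::zero) mpoly itself \<Rightarrow> 'g \<Rightarrow> 'g \<Rightarrow> bool" where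
  "gle deg T w' w \<longleftrightarrow> w - w' \<in> weight_monoid_S deg T"

definition Omega :: "('n::finite \<Rightarrow> 'g::ab_group_add) \<Rightarrow> ('n, 'k::comm_ring_1) mpoly set \<Rightarrow> 'g set" where
  "Omega deg I = {w. \<not> (I \<inter> hom_part deg w \<subseteq>
      gen_ideal (\<Union>w'\<in>{w'. gle deg TYPE(('n, 'k) mpoly) w' w \<and> w' \<noteq> w}. I \<inter> hom_part deg w'))}"

definition Wsum :: "('n::finite \<Rightarrow> 'g::ab_group_add) \<Rightarrow> ('n, 'k::comm_ring_1) mpoly set \<Rightarrow> ('n, 'k) mpoly set" where
  "Wsum deg I = {f. \<forall>m\<in>Poly_Mapping.keys f. mdeg deg m \<in> Omega deg I}"

definition graded_aut :: "('n::finite \<Rightarrow> 'g::ab_group_add) \<Rightarrow>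
    (('n, 'k::comm_ring_1) mpoly \<Rightarrow> ('n, 'k) mpoly) \<times> ('g \<Rightarrow> 'g) \<Rightarrow> bool" where
  "graded_aut deg g \<longleftrightarrow> (case g of (\<phi>, \<psi>) \<Rightarrow>
      bij \<phi> \<and> (\<forall>f h. \<phi> (f + h) = \<phi> f + \<phi> h) \<and> (\<forall>f h. \<phi> (f * h) = \<phi> f * \<phi> h) \<and>
      (\<forall>c. \<phi> (const c) = const c) \<and>
      bij \<psi> \<and> (\<forall>u v. \<psi> (u + v) = \<psi> u + \<psi> v) \<and>
      (\<forall>w. \<phi> ` hom_part deg w = hom_part deg (\<psi> w)))"

definition Aut_K :: "('n::finite \<Rightarrow> 'g::ab_group_add) \<Rightarrow>
    ((('n, 'k::comm_ring_1) mpoly \<Rightarrow> ('n, 'k) mpoly) \<times> ('g \<Rightarrow> 'g)) set" where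
  "Aut_K deg = {g. graded_aut deg g}"

definition Stab :: "'a set \<Rightarrow> (('a \<Rightarrow> 'a) \<times> 'b) set \<Rightarrow> (('a \<Rightarrow> 'a) \<times> 'b) set" where
  "Stab N G = {g\<in>G. fst g ` N = N}"

end

theory Submission imports Defs "HOL-Library.FuncSet"
begin

lemma gmult_add: "gmult (a + b) x = gmult a x + gmult b x"
  by (induct a) (auto simp: add.assoc)

lemma mdeg_add: "mdeg deg (a + b) = mdeg deg a + mdeg deg b"
  unfolding mdeg_def by (simp add: lookup_add gmult_add sum.distrib)

lemma mdeg_0[simp]: "mdeg deg 0 = 0"
  unfolding mdeg_def by simp

lemma tdeg_add: "tdeg (a + b) = tdeg a + tdeg b"
  unfolding tdeg_def by (simp add: lookup_add sum.distrib)

lemma tdeg_single: "tdeg (Poly_Mapping.single (i::'n::finite) (1::nat)) = 1"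
proof -
  have "(\<Sum>j\<in>UNIV. Poly_Mapping.lookup (Poly_Mapping.single i (1::nat)) j) = (\<Sum>j\<in>UNIV. if i = j then 1 else 0)"
    by (rule sum.cong) (auto simp: lookup_single)
  also have "\<dots> = 1" by simp
  finally show ?thesis unfolding tdeg_def .
qed
lemma tdeg_0_iff: "tdeg (m::'n::finite \<Rightarrow>\<^sub>0 nat) = 0 \<longleftrightarrow> m = 0"
proof -
  have "tdeg m = 0 \<longleftrightarrow> (\<forall>i. Poly_Mapping.lookup m i = 0)" unfolding tdeg_def by simp
  also have "\<dots> \<longleftrightarrow> m = 0" by (simp add: poly_mapping_eq_iff fun_eq_iff)
  finally show ?thesis .
qed

lemma gen_ideal_0: "0 \<in> gen_ideal A"
  unfolding gen_ideal_def by (rule CollectI, rule exI[of _ "{}"]) auto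

lemma gen_ideal_base: "a \<in> A \<Longrightarrow> a \<in> gen_ideal A"
  unfolding gen_ideal_def by (rule CollectI, rule exI[of _ "{a}"], rule exI[of _ "\<lambda>_. 1"]) auto

lemma gen_ideal_add:
  assumes "x \<in> gen_ideal A" "y \<in> gen_ideal A" shows "x + y \<in> gen_ideal A"
proof -
  obtain B1 c1 where 1: "finite B1" "B1 \<subseteq> A" "x = (\<Sum>b\<in>B1. c1 b * b)" using assms(1) unfolding gen_ideal_def by auto
  obtain B2 c2 where 2: "finite B2" "B2 \<subseteq> A" "y = (\<Sum>b\<in>B2. c2 b * b)" using assms(2) unfolding gen_ideal_def by auto
  define d1 where "d1 b = (if b \<in> B1 then c1 b else 0)" for b
  define d2 where "d2 b = (if b \<in> B2 then c2 b else 0)" for b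
  have "x = (\<Sum>b\<in>B1 \<union> B2. d1 b * b)"
    unfolding 1 d1_def by (rule sum.mono_neutral_cong_left) (use 1 2 in auto)
  moreover have "y = (\<Sum>b\<in>B1 \<union> B2. d2 b * b)"
    unfolding 2 d2_def by (rule sum.mono_neutral_cong_left) (use 1 2 in auto)
  moreover have "(\<Sum>b\<in>B1 \<union> B2. (d1 b + d2 b) * b) = (\<Sum>b\<in>B1 \<union> B2. d1 b * b) + (\<Sum>b\<in>B1 \<union> B2. d2 b * b)"
    by (simp add: distrib_right sum.distrib)
  ultimately have e: "x + y = (\<Sum>b\<in>B1 \<union> B2. (d1 b + d2 b) * b)" by simp
  show ?thesis unfolding gen_ideal_def
    by (rule CollectI, rule exI[of _ "B1 \<union> B2"], rule exI[of _ "\<lambda>b. d1 b + d2 b"]) (use 1 2 e in auto)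
qed

lemma gen_ideal_mult:
  assumes "x \<in> gen_ideal A" shows "c * x \<in> gen_ideal A"
proof -
  obtain B1 c1 where 1: "finite B1" "B1 \<subseteq> A" "x = (\<Sum>b\<in>B1. c1 b * b)" using assms(1) unfolding gen_ideal_def by auto
  have "c * x = (\<Sum>b\<in>B1. (c * c1 b) * b)" unfolding 1 by (simp add: sum_distrib_left mult.assoc)
  then show ?thesis unfolding gen_ideal_def
    using 1 by (intro CollectI exI[of _ "B1"] exI[of _ "\<lambda>b. c * c1 b"]) auto
qed

lemma gen_ideal_sum:
  assumes "finite B" "\<And>b. b \<in> B \<Longrightarrow> x b \<in> gen_ideal A"
  shows "(\<Sum>b\<in>B. d b * x b) \<in> gen_ideal A"
  using assms by (induct B rule: finite_induct) (auto intro: gen_ideal_add gen_ideal_mult gen_ideal_0)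

lemma gen_ideal_sum':
  assumes "finite B" "\<And>b. b \<in> B \<Longrightarrow> x b \<in> gen_ideal A"
  shows "(\<Sum>b\<in>B. x b) \<in> gen_ideal A"
  using assms by (induct B rule: finite_induct) (auto intro: gen_ideal_add gen_ideal_0)

lemma gen_ideal_mono:
  assumes "A \<subseteq> gen_ideal B" shows "gen_ideal A \<subseteq> gen_ideal B"
proof
  fix x assume "x \<in> gen_ideal A"
  then obtain B1 c1 where 1: "finite B1" "B1 \<subseteq> A" "x = (\<Sum>b\<in>B1. c1 b * b)" unfolding gen_ideal_def by auto
  show "x \<in> gen_ideal B" unfolding 1(3) by (rule gen_ideal_sum) (use 1 assms in auto)
qed

lemma gen_ideal_hom:
  assumes add: "\<And>f h. \<phi> (f + h) = \<phi> f + \<phi> h" and mult: "\<And>f h. \<phi> (f * h) = \<phi> f * \<phi> h"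
  shows "\<phi> ` gen_ideal A \<subseteq> gen_ideal (\<phi> ` A)"
proof
  fix y assume "y \<in> \<phi> ` gen_ideal A"
  then obtain B1 c1 where 1: "finite B1" "B1 \<subseteq> A" "y = \<phi> (\<Sum>b\<in>B1. c1 b * b)" unfolding gen_ideal_def by auto
  have z: "\<phi> 0 = 0" using add[of 0 0] by (metis add.right_neutral add_left_cancel)
  have "\<phi> (\<Sum>b\<in>B1. c1 b * b) = (\<Sum>b\<in>B1. \<phi> (c1 b) * \<phi> b)"
    using 1(1) by (induct B1 rule: finite_induct) (auto simp: z add mult)
  also have "\<dots> \<in> gen_ideal (\<phi> ` A)" by (rule gen_ideal_sum) (use 1 in \<open>auto intro: gen_ideal_base\<close>)
  finally show "y \<in> gen_ideal (\<phi> ` A)" using 1 by simp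
qed

definition hp :: "('n::finite \<Rightarrow> 'g::ab_group_add) \<Rightarrow> 'g \<Rightarrow> ('n, 'k::zero) mpoly \<Rightarrow> ('n, 'k) mpoly" where
  "hp deg w f = Abs_poly_mapping (\<lambda>m. if mdeg deg m = w then Poly_Mapping.lookup f m else 0)"

lemma lookup_hp: "Poly_Mapping.lookup (hp deg w f) m = (if mdeg deg m = w then Poly_Mapping.lookup f m else 0)"
proof -
  have "finite {m. (if mdeg deg m = w then Poly_Mapping.lookup f m else 0) \<noteq> 0}"
    by (rule finite_subset[OF _ finite_keys[of f]]) (auto simp: in_keys_iff)
  then show ?thesis unfolding hp_def by simp
qed

lemma keys_hp: "Poly_Mapping.keys (hp deg w f) = {m \<in> Poly_Mapping.keys f. mdeg deg m = w}"
  by (auto simp: in_keys_iff lookup_hp split: if_splits)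

lemma hp_hom: "hp deg w f \<in> hom_part deg w"
  by (auto simp: hom_part_def keys_hp)

lemma hp_decomp:
  fixes f :: "('n::finite, 'k::comm_ring_1) mpoly"
  shows "f = (\<Sum>w\<in>mdeg deg ` Poly_Mapping.keys f. hp deg w f)"
proof (rule poly_mapping_eqI)
  fix m
  have "Poly_Mapping.lookup (\<Sum>w\<in>mdeg deg ` Poly_Mapping.keys f. hp deg w f) m
     = (\<Sum>w\<in>mdeg deg ` Poly_Mapping.keys f. if mdeg deg m = w then Poly_Mapping.lookup f m else 0)"
    by (simp add: lookup_sum lookup_hp)
  also have "\<dots> = (if mdeg deg m \<in> mdeg deg ` Poly_Mapping.keys f then Poly_Mapping.lookup f m else 0)"
    by (simp add: sum.delta)
  also have "\<dots> = Poly_Mapping.lookup f m" by (auto simp: in_keys_iff)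
  finally show "Poly_Mapping.lookup f m = Poly_Mapping.lookup (\<Sum>w\<in>mdeg deg ` Poly_Mapping.keys f. hp deg w f) m" by simp
qed

locale pres =
  fixes deg :: "'n::finite \<Rightarrow> 'g::ab_group_add"
    and \<pi> :: "('n, 'k::field) mpoly \<Rightarrow> 'r::idom"
  assumes hom_add: "\<And>f h. \<pi> (f + h) = \<pi> f + \<pi> h"
    and hom_mult: "\<And>f h. \<pi> (f * h) = \<pi> f * \<pi> h"
    and hom_one: "\<pi> 1 = 1"
    and R0: "\<pi> ` hom_part deg 0 = range (\<lambda>c. \<pi> (const c))"
    and minimal: "\<And>f. \<pi> f = 0 \<Longrightarrow> \<forall>m\<in>Poly_Mapping.keys f. 2 \<le> tdeg m"
    and graded_R: "\<And>A f. finite A \<Longrightarrow> (\<forall>w\<in>A. f w \<in> hom_part deg w) \<Longrightarrow>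
                 \<pi> (\<Sum>w\<in>A. f w) = 0 \<Longrightarrow> (\<forall>w\<in>A. \<pi> (f w) = 0)"
begin

lemma pi0[simp]: "\<pi> 0 = 0" using hom_add[of 0 0] by (metis add.right_neutral add_left_cancel)

lemma pi_diff: "\<pi> (a - b) = \<pi> a - \<pi> b"
  using hom_add[of "a - b" b] by (simp add: algebra_simps)

lemma pi_sum: "\<pi> (sum f A) = (\<Sum>a\<in>A. \<pi> (f a))"
  by (induct A rule: infinite_finite_induct) (auto simp: hom_add)

lemma pi_var: "\<pi> (Poly_Mapping.single (Poly_Mapping.single i 1) 1) \<noteq> 0"
proof
  assume "\<pi> (Poly_Mapping.single (Poly_Mapping.single i 1) 1) = 0"
  have k: "Poly_Mapping.single i 1 \<in> Poly_Mapping.keys (Poly_Mapping.single (Poly_Mapping.single i (1::nat)) (1::'k))" by simp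
  from minimal[OF \<open>\<pi> _ = 0\<close>] k have "2 \<le> tdeg (Poly_Mapping.single i (1::nat))" by blast
  then show False unfolding tdeg_single by simp
qed

lemma pi_mon_aux: "tdeg m = t \<Longrightarrow> \<pi> (Poly_Mapping.single m 1) \<noteq> 0"
proof (induct t arbitrary: m)
  case 0
  then have "m = 0" using tdeg_0_iff by blast
  then have "Poly_Mapping.single m (1::'k) = 1" using single_one by blast
  then show ?case using hom_one by (metis one_neq_zero)
next
  case (Suc t)
  have "m \<noteq> 0"
  proof
    assume "m = 0"
    then have "tdeg m = 0" by (simp add: tdeg_def)
    with Suc(2) show False by simp
  qed
  have "\<exists>i. Poly_Mapping.lookup m i \<noteq> 0"
  proof (rule ccontr)
    assume "\<not> (\<exists>i. Poly_Mapping.lookup m i \<noteq> 0)"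
    then have "m = 0" by (intro poly_mapping_eqI) simp
    with \<open>m \<noteq> 0\<close> show False by blast
  qed
  then obtain i where i: "Poly_Mapping.lookup m i > 0" by blast
  define m' where "m' = m - Poly_Mapping.single i 1"
  have mm: "m = Poly_Mapping.single i 1 + m'"
    by (rule poly_mapping_eqI) (use i in \<open>auto simp: m'_def lookup_add lookup_minus lookup_single when_def\<close>)
  then have "tdeg m' = t" using Suc(2) unfolding mm tdeg_add tdeg_single by simp
  then have "\<pi> (Poly_Mapping.single m' 1) \<noteq> 0" using Suc(1) by blast
  moreover have "Poly_Mapping.single m 1 = Poly_Mapping.single (Poly_Mapping.single i 1) 1 * Poly_Mapping.single m' (1::'k)"
    by (simp add: mm mult_single)
  ultimately show ?case using pi_var[of i] by (simp add: hom_mult)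
qed

lemma pi_mon: "\<pi> (Poly_Mapping.single m 1) \<noteq> 0"
  using pi_mon_aux by blast

lemma mdeg_zero_imp: assumes "mdeg deg m = 0" shows "m = 0"
proof (rule ccontr)
  assume m: "m \<noteq> 0"
  have "Poly_Mapping.single m (1::'k) \<in> hom_part deg 0" using assms by (simp add: hom_part_def)
  then obtain c where c: "\<pi> (Poly_Mapping.single m 1) = \<pi> (const c)" using R0 by blast
  then have z: "\<pi> (Poly_Mapping.single m 1 - const c) = 0" by (simp add: pi_diff)
  show False
  proof (cases "c = 0")
    case True
    then show False using c pi_mon by (simp add: const_def)
  next
    case False
    have "0 \<in> Poly_Mapping.keys (Poly_Mapping.single m 1 - const c)"
      using False m by (simp add: in_keys_iff lookup_minus const_def lookup_single when_def)
    then have "2 \<le> tdeg (0::'n \<Rightarrow>\<^sub>0 nat)" using minimal[OF z] by blast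
    then show False by (simp add: tdeg_def)
  qed
qed

end
lemma nat_incsub: fixes u :: "nat \<Rightarrow> nat" shows "\<exists>g. strict_mono g \<and> incseq (\<lambda>k. u (g k))"
proof -
  obtain f where f: "strict_mono f" "monoseq (\<lambda>n. u (f n))" using seq_monosub by blast
  show ?thesis
  proof (cases "incseq (\<lambda>n. u (f n))")
    case True then show ?thesis using f by blast
  next
    case False
    then have dec: "decseq (\<lambda>n. u (f n))" using f monoseq_iff by blast
    define a where "a = (LEAST a. \<exists>n. u (f n) = a)"
    have "\<exists>n. u (f n) = a" unfolding a_def by (rule LeastI_ex) blast
    then obtain N where N: "u (f N) = a" by blast
    have const: "u (f n) = a" if "n \<ge> N" for n
    proof -
      have "u (f n) \<le> u (f N)" using dec that by (simp add: decseq_def)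
      moreover have "a \<le> u (f n)" unfolding a_def by (rule Least_le) blast
      ultimately show ?thesis using N by simp
    qed
    have "strict_mono (\<lambda>k. f (k + N))" using f(1) by (simp add: strict_mono_def)
    moreover have "incseq (\<lambda>k. u (f (k + N)))" using const by (simp add: incseq_def)
    ultimately show ?thesis by blast
  qed
qed

lemma multi_incsub:
  fixes s :: "nat \<Rightarrow> 'n \<Rightarrow> nat"
  assumes "finite J"
  shows "\<exists>g. strict_mono g \<and> (\<forall>i\<in>J. incseq (\<lambda>k. s (g k) i))"
  using assms
proof (induct J rule: finite_induct)
  case empty
  show ?case by (rule exI[of _ id]) (simp add: strict_mono_def)
next
  case (insert j J)
  obtain g where g: "strict_mono g" "\<forall>i\<in>J. incseq (\<lambda>k. s (g k) i)" using insert(3) by auto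
  obtain h where h: "strict_mono h" "incseq (\<lambda>k. s (g (h k)) j)" using nat_incsub[of "\<lambda>k. s (g k) j"] by auto
  have "strict_mono (g \<circ> h)" using g h by (simp add: strict_mono_def)
  moreover have "incseq (\<lambda>k. s (g (h k)) i)" if "i \<in> J" for i
  proof -
    have "mono h" using h(1) strict_mono_mono by blast
    then show ?thesis using g(2) that by (auto simp: incseq_def mono_def)
  qed
  ultimately show ?case using h(2) by (intro exI[of _ "g \<circ> h"]) (auto simp: comp_def)
qed

lemma finite_box: "finite {m :: 'n::finite \<Rightarrow>\<^sub>0 nat. \<forall>i. Poly_Mapping.lookup m i \<le> Poly_Mapping.lookup M i}"
proof -
  have "Poly_Mapping.lookup ` {m. \<forall>i. Poly_Mapping.lookup m i \<le> Poly_Mapping.lookup M i}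
      \<subseteq> PiE UNIV (\<lambda>i. {..Poly_Mapping.lookup M i})"
    by (auto simp: PiE_UNIV_domain)
  moreover have "finite (PiE (UNIV::'n set) (\<lambda>i. {..Poly_Mapping.lookup M i}))"
    by (rule finite_PiE) auto
  ultimately have fi: "finite (Poly_Mapping.lookup ` {m. \<forall>i. Poly_Mapping.lookup m i \<le> Poly_Mapping.lookup M i})"
    by (rule finite_subset)
  have inj: "inj_on Poly_Mapping.lookup {m :: 'n \<Rightarrow>\<^sub>0 nat. \<forall>i. Poly_Mapping.lookup m i \<le> Poly_Mapping.lookup M i}"
    by (rule inj_onI) (simp add: poly_mapping.lookup_inject)
  show ?thesis by (rule finite_imageD[OF fi inj])
qed

context pres begin

lemma fiber_finite: "finite {m. mdeg deg m = w}"
proof (rule ccontr)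
  assume inf: "infinite {m. mdeg deg m = w}"
  have "\<exists>f :: nat \<Rightarrow> ('n \<Rightarrow>\<^sub>0 nat). inj f \<and> range f \<subseteq> {m. mdeg deg m = w}"
    using infinite_iff_countable_subset[THEN iffD1, OF inf] .
  then obtain s :: "nat \<Rightarrow> ('n \<Rightarrow>\<^sub>0 nat)" where s: "inj s" "range s \<subseteq> {m. mdeg deg m = w}"
    by blast
  have "\<exists>g. strict_mono g \<and> (\<forall>i\<in>UNIV. incseq (\<lambda>k. Poly_Mapping.lookup (s (g k)) i))"
    by (rule multi_incsub) simp
  then obtain g where g: "strict_mono g" "\<forall>i\<in>UNIV. incseq (\<lambda>k. Poly_Mapping.lookup (s (g k)) i)"
    by blast
  define m where "m = s (g 0)"
  define m' where "m' = s (g 1)"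
  have le: "Poly_Mapping.lookup m i \<le> Poly_Mapping.lookup m' i" for i
  proof -
    have "incseq (\<lambda>k. Poly_Mapping.lookup (s (g k)) i)" using g(2) by blast
    from incseqD[OF this, of 0 1] show ?thesis unfolding m_def m'_def by simp
  qed
  have "g 0 < g 1" using g(1) by (rule strict_monoD) simp
  then have ne: "m \<noteq> m'" unfolding m_def m'_def using injD[OF s(1)] by fastforce
  define d where "d = m' - m"
  have md: "m' = m + d"
    by (rule poly_mapping_eqI) (use le in \<open>simp add: d_def lookup_add lookup_minus\<close>)
  have "s (g 0) \<in> range s" "s (g 1) \<in> range s" by simp_all
  then have w1: "mdeg deg m = w" "mdeg deg m' = w" using subsetD[OF s(2)] unfolding m_def m'_def by auto
  have "mdeg deg m' = mdeg deg m + mdeg deg d" unfolding md by (rule mdeg_add)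
  then have "mdeg deg m + mdeg deg d = mdeg deg m + 0" using w1 by simp
  then have "mdeg deg d = 0" by (rule add_left_imp_eq)
  then have "d = 0" by (rule mdeg_zero_imp)
  then show False using md ne by simp
qed

definition D where "D w = {m. \<exists>n. mdeg deg (m + n) = w}"

lemma D_finite: "finite (D w)"
proof -
  have "D w \<subseteq> (\<Union>M\<in>{m. mdeg deg m = w}. {m. \<forall>i. Poly_Mapping.lookup m i \<le> Poly_Mapping.lookup M i})"
    by (auto simp: D_def lookup_add)
  moreover have "finite (\<Union>M\<in>{m. mdeg deg m = w}. {m. \<forall>i. Poly_Mapping.lookup m i \<le> Poly_Mapping.lookup M i})"
    by (rule finite_UN_I[OF fiber_finite finite_box])
  ultimately show ?thesis by (rule finite_subset)
qed

end
context pres begin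

lemma gen_I: "gen_ideal {f. \<pi> f = 0} \<subseteq> {f. \<pi> f = 0}"
proof
  fix x assume "x \<in> gen_ideal {f. \<pi> f = 0}"
  then obtain B c where B: "finite B" "B \<subseteq> {f. \<pi> f = 0}" "x = (\<Sum>b\<in>B. c b * b)" unfolding gen_ideal_def by auto
  have "\<pi> x = (\<Sum>b\<in>B. \<pi> (c b) * \<pi> b)" using B(3) by (simp add: pi_sum hom_mult)
  also have "\<dots> = 0" by (rule sum.neutral) (use B(2) in auto)
  finally show "x \<in> {f. \<pi> f = 0}" by simp
qed


lemma D_less:
  assumes "m' \<in> D w'" "mdeg deg n = w - w'" "w' \<noteq> w" "mdeg deg m' = w'"
  shows "card (D w') < card (D w)"
proof -
  have sub: "D w' \<subseteq> D w"
  proof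
    fix m assume "m \<in> D w'"
    then obtain k where "mdeg deg (m + k) = w'" by (auto simp: D_def)
    then have "mdeg deg (m + (k + n)) = w" using assms(2) by (simp add: mdeg_add add.assoc[symmetric])
    then show "m \<in> D w" by (auto simp: D_def)
  qed
  have "m' + n \<in> D w" using assms by (auto simp: D_def intro!: exI[of _ 0] simp: mdeg_add)
  moreover have "m' + n \<notin> D w'"
  proof
    assume "m' + n \<in> D w'"
    then obtain k where "mdeg deg (m' + n + k) = w'" by (auto simp: D_def)
    then have "mdeg deg m' + (mdeg deg n + mdeg deg k) = w'" by (simp add: mdeg_add add.assoc)
    then have "w' + (mdeg deg n + mdeg deg k) = w' + 0" using assms(4) by simp
    then have "mdeg deg n + mdeg deg k = 0" by (rule add_left_imp_eq)
    then have "mdeg deg (n + k) = 0" by (simp add: mdeg_add)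
    then have nk: "n + k = 0" by (rule mdeg_zero_imp)
    have "n = 0"
    proof (rule poly_mapping_eqI)
      fix i
      have "Poly_Mapping.lookup (n + k) i = 0" using nk by simp
      then show "Poly_Mapping.lookup n i = Poly_Mapping.lookup 0 i" by (simp add: lookup_add)
    qed
    then show False using assms(2,3) by simp
  qed
  ultimately have "D w' \<subset> D w" using sub by blast
  then show ?thesis using D_finite psubset_card_mono by blast
qed

lemma hom_gen: "\<pi> f = 0 \<Longrightarrow> f \<in> hom_part deg w \<Longrightarrow> f \<in> gen_ideal ({f. \<pi> f = 0} \<inter> Wsum deg {f. \<pi> f = 0})"
proof (induct "card (D w)" arbitrary: w f rule: less_induct)
  case less
  let ?I = "{f. \<pi> f = 0}"
  show ?case
  proof (cases "w \<in> Omega deg ?I")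
    case True
    then have "f \<in> Wsum deg ?I" using less(3) by (auto simp: Wsum_def hom_part_def)
    then show ?thesis using less(2) by (auto intro: gen_ideal_base)
  next
    case False
    let ?U = "(\<Union>w'\<in>{w'. gle deg TYPE(('n, 'k) mpoly) w' w \<and> w' \<noteq> w}. ?I \<inter> hom_part deg w')"
    have "f \<in> gen_ideal ?U" using False less(2,3) unfolding Omega_def by blast
    moreover have "?U \<subseteq> gen_ideal (?I \<inter> Wsum deg ?I)"
    proof
      fix b assume "b \<in> ?U"
      then obtain w' where w': "gle deg TYPE(('n, 'k) mpoly) w' w" "w' \<noteq> w" "\<pi> b = 0" "b \<in> hom_part deg w'" by blast
      show "b \<in> gen_ideal (?I \<inter> Wsum deg ?I)"
      proof (cases "b = 0")
        case True then show ?thesis by (simp add: gen_ideal_0)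
      next
        case False
        then have "Poly_Mapping.keys b \<noteq> {}" by simp
        then obtain m' where m': "m' \<in> Poly_Mapping.keys b" by blast
        then have m'd: "mdeg deg m' = w'" using w'(4) by (auto simp: hom_part_def)
        have "hom_part deg (w - w') \<noteq> ({0} :: ('n, 'k) mpoly set)"
          using w'(1) by (simp add: gle_def weight_monoid_S_def)
        moreover have "(0 :: ('n, 'k) mpoly) \<in> hom_part deg (w - w')" by (simp add: hom_part_def)
        ultimately obtain p :: "('n, 'k) mpoly" where p: "p \<in> hom_part deg (w - w')" "p \<noteq> 0"
          by blast
        then have "Poly_Mapping.keys p \<noteq> {}" by simp
        then obtain n where "n \<in> Poly_Mapping.keys p" by blast
        then have "mdeg deg n = w - w'" using p by (auto simp: hom_part_def)
        moreover have "m' \<in> D w'" using m'd by (auto simp: D_def intro!: exI[of _ 0])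
        ultimately have "card (D w') < card (D w)" using D_less w'(2) m'd by blast
        then show ?thesis using less(1) w'(3,4) by blast
      qed
    qed
    ultimately show ?thesis using gen_ideal_mono by blast
  qed
qed

lemma part1: "gen_ideal ({f. \<pi> f = 0} \<inter> Wsum deg {f. \<pi> f = 0}) = {f. \<pi> f = 0}"
proof
  have "{f. \<pi> f = 0} \<inter> Wsum deg {f. \<pi> f = 0} \<subseteq> gen_ideal {f. \<pi> f = 0}"
    using gen_ideal_base[of _ "{f. \<pi> f = 0}"] by blast
  then have "gen_ideal ({f. \<pi> f = 0} \<inter> Wsum deg {f. \<pi> f = 0}) \<subseteq> gen_ideal {f. \<pi> f = 0}"
    by (rule gen_ideal_mono)
  then show "gen_ideal ({f. \<pi> f = 0} \<inter> Wsum deg {f. \<pi> f = 0}) \<subseteq> {f. \<pi> f = 0}"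
    using gen_I by (rule order_trans)
  show "{f. \<pi> f = 0} \<subseteq> gen_ideal ({f. \<pi> f = 0} \<inter> Wsum deg {f. \<pi> f = 0})"
  proof
    fix f assume f: "f \<in> {f. \<pi> f = 0}"
    let ?A = "mdeg deg ` Poly_Mapping.keys f"
    have dec: "f = (\<Sum>w\<in>?A. hp deg w f)" by (rule hp_decomp)
    have fin: "finite ?A" by simp
    have hh: "\<forall>w\<in>?A. hp deg w f \<in> hom_part deg w" using hp_hom by blast
    have z: "\<pi> (\<Sum>w\<in>?A. hp deg w f) = 0" using f dec by simp
    have "\<forall>w\<in>?A. \<pi> (hp deg w f) = 0" by (rule graded_R[OF fin hh z])
    then have "\<And>w. w \<in> ?A \<Longrightarrow> hp deg w f \<in> gen_ideal ({f. \<pi> f = 0} \<inter> Wsum deg {f. \<pi> f = 0})"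
      using hom_gen hp_hom by blast
    then have "(\<Sum>w\<in>?A. hp deg w f) \<in> gen_ideal ({f. \<pi> f = 0} \<inter> Wsum deg {f. \<pi> f = 0})"
      by (rule gen_ideal_sum'[OF fin])
    then show "f \<in> gen_ideal ({f. \<pi> f = 0} \<inter> Wsum deg {f. \<pi> f = 0})" using dec by simp
  qed
qed

end

lemma aut_D:
  assumes "graded_aut deg (\<phi>, \<psi>)"
  shows "bij \<phi>" "\<And>f h. \<phi> (f + h) = \<phi> f + \<phi> h" "\<And>f h. \<phi> (f * h) = \<phi> f * \<phi> h"
    "\<And>c. \<phi> (const c) = const c" "bij \<psi>" "\<And>u v. \<psi> (u + v) = \<psi> u + \<psi> v"
    "\<And>w. \<phi> ` hom_part deg w = hom_part deg (\<psi> w)"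
  using assms unfolding graded_aut_def by auto

lemma inv_add:
  assumes "bij f" "\<And>x y. f (x + y) = f x + f y"
  shows "inv f (x + y) = inv f x + inv f y"
proof -
  have "f (inv f x + inv f y) = x + y" using assms by (simp add: bij_is_surj surj_f_inv_f)
  then show ?thesis using assms(1) by (metis bij_is_inj inv_f_f)
qed

lemma inv_mult:
  assumes "bij f" "\<And>x y. f (x * y) = f x * f y"
  shows "inv f (x * y) = inv f x * inv f y"
proof -
  have "f (inv f x * inv f y) = x * y" using assms by (simp add: bij_is_surj surj_f_inv_f)
  then show ?thesis using assms(1) by (metis bij_is_inj inv_f_f)
qed

lemma aut_inv:
  assumes "graded_aut deg (\<phi>, \<psi>)"
  shows "graded_aut deg (inv \<phi>, inv \<psi>)"
proof -
  note a = aut_D[OF assms]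
  have h: "inv \<phi> ` hom_part deg w = hom_part deg (inv \<psi> w)" for w
  proof -
    have "hom_part deg w = \<phi> ` hom_part deg (inv \<psi> w)" using a(7)[of "inv \<psi> w"] a(5)
      by (simp add: bij_is_surj surj_f_inv_f)
    then show ?thesis using a(1) by (simp add: bij_is_inj image_inv_f_f)
  qed
  have c: "inv \<phi> (const c) = const c" for c using a(1) a(4)[of c] by (metis bij_is_inj inv_f_f)
  show ?thesis unfolding graded_aut_def using a h c
    by (auto simp: bij_imp_bij_inv inv_add inv_mult)
qed

lemma inv_image_eq:
  assumes "bij \<phi>" "\<phi> ` A = A" shows "inv \<phi> ` A = A"
  using assms by (metis bij_is_inj image_inv_f_f)

lemma add_diff_hom: assumes "\<And>u v. \<psi> (u + v) = \<psi> u + (\<psi> v::'g::ab_group_add)"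
  shows "\<psi> (a - b) = \<psi> a - \<psi> (b::'g)"
  using assms[of "a - b" b] by (simp add: algebra_simps)

lemma hom_part_0: "0 \<in> hom_part deg w" by (simp add: hom_part_def)

lemma Omega_pres:
  fixes I :: "('n::finite, 'k::comm_ring_1) mpoly set" and deg :: "'n \<Rightarrow> 'g::ab_group_add"
  assumes g: "graded_aut deg (\<phi>, \<psi>)" and I: "\<phi> ` I = I" and w: "w \<notin> Omega deg I"
  shows "\<psi> w \<notin> Omega deg I"
proof -
  note a = aut_D[OF g]
  have inj: "inj \<phi>" using a(1) bij_is_inj by blast
  have p0: "\<phi> 0 = 0" using a(2)[of 0 0] by (metis add.right_neutral add_left_cancel)
  define U where "U v = (\<Union>w'\<in>{w'. gle deg TYPE(('n, 'k) mpoly) w' v \<and> w' \<noteq> v}. I \<inter> hom_part deg w')" for v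
  have w': "I \<inter> hom_part deg w \<subseteq> gen_ideal (U w)" using w unfolding Omega_def U_def by blast
  have "\<phi> ` U w \<subseteq> U (\<psi> w)"
  proof
    fix x assume "x \<in> \<phi> ` U w"
    then obtain b w' where b: "x = \<phi> b" "gle deg TYPE(('n, 'k) mpoly) w' w" "w' \<noteq> w" "b \<in> I" "b \<in> hom_part deg w'"
      unfolding U_def by blast
    have "x \<in> I" using b I by blast
    moreover have "x \<in> hom_part deg (\<psi> w')" using b a(7) by blast
    moreover have "\<psi> w' \<noteq> \<psi> w" using b(3) a(5) by (metis bij_is_inj inj_eq)
    moreover have "gle deg TYPE(('n, 'k) mpoly) (\<psi> w') (\<psi> w)"
    proof -
      have ne: "hom_part deg (w - w') \<noteq> ({0} :: ('n, 'k) mpoly set)" using b(2) by (simp add: gle_def weight_monoid_S_def)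
      then obtain y :: "('n, 'k) mpoly" where y: "y \<in> hom_part deg (w - w')" "y \<noteq> 0" using hom_part_0 by blast
      then have "\<phi> y \<noteq> 0" using inj p0 by (metis inj_eq)
      moreover have "\<phi> y \<in> hom_part deg (\<psi> (w - w'))" using y a(7) by blast
      ultimately have "hom_part deg (\<psi> w - \<psi> w') \<noteq> ({0} :: ('n, 'k) mpoly set)"
        using add_diff_hom[OF a(6)] by auto
      then show ?thesis by (simp add: gle_def weight_monoid_S_def)
    qed
    ultimately show "x \<in> U (\<psi> w)" unfolding U_def by blast
  qed
  have "I \<inter> hom_part deg (\<psi> w) \<subseteq> gen_ideal (U (\<psi> w))"
  proof
    fix f assume f: "f \<in> I \<inter> hom_part deg (\<psi> w)"
    then obtain f0 where f0: "f0 \<in> hom_part deg w" "f = \<phi> f0" using a(7) by blast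
    obtain f1 where f1: "f1 \<in> I" "f = \<phi> f1" using f I by blast
    have "f0 = f1" using f0 f1 inj by (metis inj_eq)
    then have "f0 \<in> gen_ideal (U w)" using f0 f1 w' by blast
    then have "f \<in> gen_ideal (\<phi> ` U w)" using gen_ideal_hom[of \<phi> "U w"] a(2,3) f0 by blast
    moreover have "gen_ideal (\<phi> ` U w) \<subseteq> gen_ideal (U (\<psi> w))"
      using \<open>\<phi> ` U w \<subseteq> U (\<psi> w)\<close> gen_ideal_base gen_ideal_mono by (metis subset_iff)
    ultimately show "f \<in> gen_ideal (U (\<psi> w))" by blast
  qed
  then show ?thesis unfolding Omega_def U_def by blast
qed

lemma Omega_pres':
  fixes I :: "('n::finite, 'k::comm_ring_1) mpoly set" and deg :: "'n \<Rightarrow> 'g::ab_group_add"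
  assumes g: "graded_aut deg (\<phi>, \<psi>)" and I: "\<phi> ` I = I" and w: "w \<in> Omega deg I"
  shows "\<psi> w \<in> Omega deg I"
proof (rule ccontr)
  assume "\<psi> w \<notin> Omega deg I"
  moreover have "inv \<phi> ` I = I" using inv_image_eq aut_D(1)[OF g] I by blast
  ultimately have "inv \<psi> (\<psi> w) \<notin> Omega deg I" using Omega_pres[OF aut_inv[OF g]] by blast
  then show False using w aut_D(5)[OF g] by (simp add: bij_is_inj)
qed

lemma Wsum_sum:
  assumes "finite A" "\<And>a. a \<in> A \<Longrightarrow> x a \<in> Wsum deg I"
  shows "sum x A \<in> Wsum deg I"
  using assms
proof (induct A rule: finite_induct)
  case empty then show ?case by (simp add: Wsum_def)
next
  case (insert a A)
  then have "x a \<in> Wsum deg I" "sum x A \<in> Wsum deg I" by auto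
  then show ?case using insert keys_add[of "x a" "sum x A"] by (auto simp: Wsum_def)
qed

lemma W_pres:
  fixes I :: "('n::finite, 'k::comm_ring_1) mpoly set" and deg :: "'n \<Rightarrow> 'g::ab_group_add"
  assumes g: "graded_aut deg (\<phi>, \<psi>)" and I: "\<phi> ` I = I"
  shows "\<phi> ` (I \<inter> Wsum deg I) \<subseteq> I \<inter> Wsum deg I"
proof
  note a = aut_D[OF g]
  have p0: "\<phi> 0 = 0" using a(2)[of 0 0] by (metis add.right_neutral add_left_cancel)
  fix y assume "y \<in> \<phi> ` (I \<inter> Wsum deg I)"
  then obtain f where f: "y = \<phi> f" "f \<in> I" "f \<in> Wsum deg I" by blast
  have "y \<in> I" using f I by blast
  let ?A = "mdeg deg ` Poly_Mapping.keys f"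
  have "y = \<phi> (\<Sum>w\<in>?A. hp deg w f)" using f hp_decomp by metis
  also have "\<dots> = (\<Sum>w\<in>?A. \<phi> (hp deg w f))"
    by (induct rule: finite_induct[OF finite_imageI[OF finite_keys]]) (auto simp: p0 a(2))
  finally have y: "y = (\<Sum>w\<in>?A. \<phi> (hp deg w f))" .
  have "\<phi> (hp deg w f) \<in> Wsum deg I" if "w \<in> ?A" for w
  proof -
    have "w \<in> Omega deg I" using that f(3) by (auto simp: Wsum_def)
    then have "\<psi> w \<in> Omega deg I" using Omega_pres'[OF g I] by blast
    moreover have "\<phi> (hp deg w f) \<in> hom_part deg (\<psi> w)" using a(7) hp_hom by blast
    ultimately show ?thesis by (auto simp: Wsum_def hom_part_def)
  qed
  then have "y \<in> Wsum deg I" unfolding y by (intro Wsum_sum) auto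
  with \<open>y \<in> I\<close> show "y \<in> I \<inter> Wsum deg I" by blast
qed

lemma sub_image:
  assumes "bij \<phi>" "inv \<phi> ` A \<subseteq> A" shows "A \<subseteq> \<phi> ` A"
proof
  fix x assume "x \<in> A"
  then have "inv \<phi> x \<in> A" using assms(2) by blast
  moreover have "\<phi> (inv \<phi> x) = x" using assms(1) by (simp add: bij_is_surj surj_f_inv_f)
  ultimately show "x \<in> \<phi> ` A" by (metis image_eqI)
qed

theorem proposition2p8:
  fixes deg :: "'n::finite \<Rightarrow> 'g::ab_group_add"
    and \<pi> :: "('n, 'k::field_char_0) mpoly \<Rightarrow> 'r::idom"
  assumes alg_closed: "alg_closed_field TYPE('k)"
    and K_fg: "fin_gen_group TYPE('g)"
    and hom_add: "\<And>f h. \<pi> (f + h) = \<pi> f + \<pi> h"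
    and hom_mult: "\<And>f h. \<pi> (f * h) = \<pi> f * \<pi> h"
    and hom_one: "\<pi> 1 = 1"
    and surj: "surj \<pi>"
    and graded_R: "\<And>A f. finite A \<Longrightarrow> (\<forall>w\<in>A. f w \<in> hom_part deg w) \<Longrightarrow>
                 \<pi> (\<Sum>w\<in>A. f w) = 0 \<Longrightarrow> (\<forall>w\<in>A. \<pi> (f w) = 0)"
    and effective: "group_gen {w. \<pi> ` hom_part deg w \<noteq> {0}} = UNIV"
    and R0: "\<pi> ` hom_part deg 0 = range (\<lambda>c. \<pi> (const c))"
    and pointed: "\<not> qcone_contains_line {w. \<pi> ` hom_part deg w \<noteq> {0}}"
    and minimal: "\<And>f. \<pi> f = 0 \<Longrightarrow> \<forall>m\<in>Poly_Mapping.keys f. 2 \<le> tdeg m"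
  shows "gen_ideal ({f. \<pi> f = 0} \<inter> Wsum deg {f. \<pi> f = 0}) = {f. \<pi> f = 0}
       \<and> Stab {f. \<pi> f = 0} (Aut_K deg) = Stab ({f. \<pi> f = 0} \<inter> Wsum deg {f. \<pi> f = 0}) (Aut_K deg)"
proof -
  interpret pres deg \<pi>
    by (unfold_locales; fact hom_add hom_mult hom_one R0 minimal graded_R)
  let ?I = "{f. \<pi> f = 0}"
  let ?IW = "?I \<inter> Wsum deg ?I"
  have p1: "gen_ideal ?IW = ?I" by (rule part1)
  have "Stab ?I (Aut_K deg) = Stab ?IW (Aut_K deg)"
  proof (rule set_eqI)
    fix g :: "(('n, 'k) mpoly \<Rightarrow> ('n, 'k) mpoly) \<times> ('g \<Rightarrow> 'g)"
    obtain \<phi> \<psi> where g: "g = (\<phi>, \<psi>)" by fastforce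
    show "g \<in> Stab ?I (Aut_K deg) \<longleftrightarrow> g \<in> Stab ?IW (Aut_K deg)"
    proof (cases "graded_aut deg (\<phi>, \<psi>)")
      case False then show ?thesis by (simp add: Stab_def Aut_K_def g)
    next
      case True
      note a = aut_D[OF True]
      have ia: "graded_aut deg (inv \<phi>, inv \<psi>)" by (rule aut_inv[OF True])
      note b = aut_D[OF ia]
      have "\<phi> ` ?I = ?I \<longleftrightarrow> \<phi> ` ?IW = ?IW"
      proof
        assume I: "\<phi> ` ?I = ?I"
        have 1: "\<phi> ` ?IW \<subseteq> ?IW" by (rule W_pres[OF True I])
        have "inv \<phi> ` ?I = ?I" using inv_image_eq a(1) I by blast
        then have "inv \<phi> ` ?IW \<subseteq> ?IW" by (rule W_pres[OF ia])
        then have "?IW \<subseteq> \<phi> ` ?IW"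
          by (rule sub_image[OF a(1)])
        with 1 show "\<phi> ` ?IW = ?IW" by blast
      next
        assume W: "\<phi> ` ?IW = ?IW"
        have 1: "\<phi> ` ?I \<subseteq> ?I" using gen_ideal_hom[of \<phi> ?IW] a(2,3) W p1 by simp
        have "inv \<phi> ` ?IW = ?IW" using inv_image_eq a(1) W by blast
        then have "inv \<phi> ` ?I \<subseteq> ?I" using gen_ideal_hom[of "inv \<phi>" ?IW] b(2,3) p1 by simp
        then have "?I \<subseteq> \<phi> ` ?I"
          by (rule sub_image[OF a(1)])
        with 1 show "\<phi> ` ?I = ?I" by blast
      qed
      then show ?thesis using True by (simp add: Stab_def Aut_K_def g)
    qed
  qed
  with p1 show ?thesis by blast
qed

end
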